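(* Let $d$ be a positive integer, let $\varepsilon>0$, and let $\omega_N\subset\mathbb{S}^{d-1}$ be a set of $N\ge 3$ distinct points. Assume that for any three distinct points $x,y,z\in\omega_N$, $$\langle x,y\rangle\langle x,z\rangle\langle y,z\rangle\le-\varepsilon.$$ Then $N\le 1+\frac{1}{\varepsilon}$.
   Context: $\langle\cdot,\cdot\rangle$ is the Euclidean inner product and $\mathbb{S}^{d-1}$ is the unit sphere in $\mathbb{R}^d$. *)

theory Defs
  imports "HOL-Analysis.Analysis"
begin

end

theory Submission
  imports Defs
begin

lemma abs_ge_eps:
  fixes a b c e :: real
  assumes "\<bar>a\<bar> \<le> 1" "\<bar>b\<bar> \<le> 1" "c * a * b \<le> - e" "e > 0"
  shows "\<bar>c\<bar> \<ge> e"
proof -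
  have "\<bar>a\<bar> * \<bar>b\<bar> \<le> 1" using assms by (simp add: mult_le_one)
  hence "\<bar>c\<bar> * (\<bar>a\<bar> * \<bar>b\<bar>) \<le> \<bar>c\<bar>" by (simp add: mult_left_le)
  hence "\<bar>c * a * b\<bar> \<le> \<bar>c\<bar>" by (simp add: abs_mult mult.assoc)
  thus ?thesis using assms by linarith
qed

lemma sign_part:
  fixes a b c e :: real
  assumes "a * b * c \<le> - e" "e > 0" "\<bar>c\<bar> \<ge> e"
  shows "sgn a * sgn b * c \<le> - e"
proof -
  have ab: "a \<noteq> 0" "b \<noteq> 0" using assms by auto
  have "sgn a * sgn b * c * (\<bar>a\<bar> * \<bar>b\<bar>) = a * b * c"
    by (metis abs_mult_sgn mult.assoc mult.commute)
  hence "sgn a * sgn b * c * (\<bar>a\<bar> * \<bar>b\<bar>) < 0" using assms by linarith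
  hence neg: "sgn a * sgn b * c < 0" using ab
    by (simp add: mult_less_0_iff)
  have "\<bar>sgn a * sgn b * c\<bar> = \<bar>c\<bar>" using ab by (auto simp: abs_mult sgn_if)
  thus ?thesis using neg assms by linarith
qed

theorem lemma3p4:
  fixes W :: "'a::euclidean_space set" and \<epsilon> :: real
  assumes "\<epsilon> > 0"
    and "finite W" and "card W \<ge> 3"
    and "W \<subseteq> sphere 0 1"
    and "\<And>x y z. x \<in> W \<Longrightarrow> y \<in> W \<Longrightarrow> z \<in> W \<Longrightarrow> x \<noteq> y \<Longrightarrow> x \<noteq> z \<Longrightarrow> y \<noteq> z
           \<Longrightarrow> (x \<bullet> y) * (x \<bullet> z) * (y \<bullet> z) \<le> - \<epsilon>"
  shows "real (card W) \<le> 1 + 1 / \<epsilon>"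
proof -
  note ep = assms(1) and fin = assms(2) and tri = assms(5)
  have nrm: "x \<in> W \<Longrightarrow> norm x = 1" for x using assms(4) by auto
  have ip1: "x \<in> W \<Longrightarrow> y \<in> W \<Longrightarrow> \<bar>x \<bullet> y\<bar> \<le> 1" for x y
    using Cauchy_Schwarz_ineq2[of x y] nrm by auto
  have third: "\<exists>z\<in>W. z \<noteq> x \<and> z \<noteq> y" for x y
  proof (rule ccontr)
    assume "\<not> ?thesis"
    hence "W \<subseteq> {x, y}" by auto
    hence "card W \<le> card {x, y}" by (simp add: card_mono)
    also have "\<dots> \<le> 2" by (simp add: card_insert_le_m1)
    finally show False using assms(3) by linarith
  qed
  have big: "\<bar>x \<bullet> y\<bar> \<ge> \<epsilon>" if xy: "x \<in> W" "y \<in> W" "x \<noteq> y" for x y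
  proof -
    obtain z where z: "z \<in> W" "z \<noteq> x" "z \<noteq> y" using third by blast
    have "(x \<bullet> y) * (x \<bullet> z) * (y \<bullet> z) \<le> - \<epsilon>" using tri xy z by auto
    thus ?thesis using abs_ge_eps[of "x \<bullet> z" "y \<bullet> z" "x \<bullet> y" \<epsilon>] ip1 xy z ep by auto
  qed
  have "W \<noteq> {}" using assms(3) by auto
  then obtain x0 where x0: "x0 \<in> W" by auto
  define s where "s x = (if x = x0 then 1 else - sgn (x0 \<bullet> x))" for x
  have s2: "s x * s x = 1" if "x \<in> W" for x
  proof (cases "x = x0")
    case False
    hence "x0 \<bullet> x \<noteq> 0" using big[of x0 x] that x0 ep by auto
    thus ?thesis using False by (simp add: s_def sgn_if)
  qed (simp add: s_def)
  have key: "s x * s y * (x \<bullet> y) \<le> - \<epsilon>" if xy: "x \<in> W" "y \<in> W" "x \<noteq> y" for x y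
  proof (cases "x = x0")
    case True
    hence "y \<noteq> x0" using xy by auto
    hence "s x * s y * (x \<bullet> y) = - \<bar>x0 \<bullet> y\<bar>" using True
      by (simp add: s_def abs_sgn mult.commute)
    thus ?thesis using big[OF xy] True by simp
  next
    case xn: False
    show ?thesis
    proof (cases "y = x0")
      case True
      hence "s x * s y * (x \<bullet> y) = - \<bar>x0 \<bullet> x\<bar>" using xn
        by (simp add: s_def abs_sgn mult.commute inner_commute)
      thus ?thesis using big[OF xy] True by (simp add: inner_commute)
    next
      case yn: False
      have "(x0 \<bullet> x) * (x0 \<bullet> y) * (x \<bullet> y) \<le> - \<epsilon>" using tri x0 xy xn yn by metis
      hence "sgn (x0 \<bullet> x) * sgn (x0 \<bullet> y) * (x \<bullet> y) \<le> - \<epsilon>"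
        using sign_part big[OF xy] ep by blast
      thus ?thesis using xn yn by (simp add: s_def)
    qed
  qed
  define v where "v = (\<Sum>x\<in>W. s x *\<^sub>R x)"
  define N where "N = real (card W)"
  have "v \<bullet> v = (\<Sum>x\<in>W. \<Sum>y\<in>W. s x * s y * (x \<bullet> y))"
    unfolding v_def by (simp add: inner_sum_left inner_sum_right sum_distrib_left mult.assoc inner_commute mult.left_commute)
  also have "\<dots> \<le> (\<Sum>x\<in>W. 1 - (N - 1) * \<epsilon>)"
  proof (rule sum_mono)
    fix x assume x: "x \<in> W"
    have "(\<Sum>y\<in>W. s x * s y * (x \<bullet> y)) = s x * s x * (x \<bullet> x) + (\<Sum>y\<in>W - {x}. s x * s y * (x \<bullet> y))"
      using sum.remove[OF fin x] by simp
    also have "s x * s x * (x \<bullet> x) = 1" using s2[OF x] nrm[OF x]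
      by (simp add: power2_norm_eq_inner[symmetric])
    also have "(\<Sum>y\<in>W - {x}. s x * s y * (x \<bullet> y)) \<le> (\<Sum>y\<in>W - {x}. - \<epsilon>)"
      by (rule sum_mono) (use key x in auto)
    also have "(\<Sum>y\<in>W - {x}. - \<epsilon>) = - (N - 1) * \<epsilon>"
    proof -
      have "card W \<ge> 1" using assms(3) by linarith
      thus ?thesis using fin x by (simp add: N_def card_Diff_singleton of_nat_diff algebra_simps)
    qed
    finally show "(\<Sum>y\<in>W. s x * s y * (x \<bullet> y)) \<le> 1 - (N - 1) * \<epsilon>" by (simp add: algebra_simps)
  qed
  also have "\<dots> = N * (1 - (N - 1) * \<epsilon>)" by (simp add: N_def)
  finally have "0 \<le> N * (1 - (N - 1) * \<epsilon>)" using inner_ge_zero[of v] by linarith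
  moreover have "N > 0" using assms(3) by (simp add: N_def)
  ultimately have "(N - 1) * \<epsilon> \<le> 1" by (simp add: zero_le_mult_iff)
  hence "N - 1 \<le> 1 / \<epsilon>" using ep by (simp add: field_simps)
  thus ?thesis by (simp add: N_def)
qed

end
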